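(* Let $m\ge2$, $G=CK(2m-1)$, and let $B$ be a blocker for the simple Hamiltonian paths of $G$ whose $m$ edges are parallel (or equal) to the boundary edges $[0,1],[1,2],\dots,[m-1,m]$, one edge per direction. Let $[\alpha,\alpha+1]$ and $[m-\delta-1,m-\delta]$ be, respectively, the first and the last edges of the path $\langle 0,1,\dots,m\rangle$ that belong to $B$ (so $0\le\alpha<\alpha+1\le m-\delta-1<m-\delta\le m$). Then $B$ misses at most one edge of the boundary path $\langle\alpha,\alpha+1,\dots,m-\delta\rangle$.
   Context: $CK(2m-1)$ is the complete convex geometric graph on $2m-1$ points in convex position, labelled clockwise $0,\dots,2m-2$ (elements of $\mathbb{Z}_{2m-1}$), with all segments as edges; boundary edges are $[i,i+1]$. The direction of $[i,j]$ is $i+j\pmod{2m-1}$ and edges are parallel if they have the same direction. A simple Hamiltonian path (SHP) is a path through all vertices whose edges pairwise do not cross; a blocker for SHPs is an edge set of smallest possible size meeting (sharing an edge with) every SHP. (Every blocker has size $m$ and contains at least two boundary edges.) *)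

theory Defs
  imports Main
begin

(* CK(n): vertices 0..n-1 in convex position, labelled clockwise.
   Edges are 2-element subsets {i,j} of {0..<n}. *)

definition ck_edges :: "nat \<Rightarrow> nat set set" where
  "ck_edges n = {{i, j} | i j. i < n \<and> j < n \<and> i \<noteq> j}"

definition strictly_between :: "nat \<Rightarrow> nat \<Rightarrow> nat \<Rightarrow> bool" where
  "strictly_between x y z \<longleftrightarrow> min x y < z \<and> z < max x y"

(* segments [a,b] and [c,d] between points in convex position cross
   iff they have no common endpoint and exactly one of c,d lies between a and b *)
definition seg_cross :: "nat \<Rightarrow> nat \<Rightarrow> nat \<Rightarrow> nat \<Rightarrow> bool" where
  "seg_cross a b c d \<longleftrightarrow>
     {a, b} \<inter> {c, d} = {} \<and> (strictly_between a b c \<noteq> strictly_between a b d)"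

definition path_edges :: "nat list \<Rightarrow> nat set set" where
  "path_edges p = {{p ! i, p ! Suc i} | i. Suc i < length p}"

definition is_SHP :: "nat \<Rightarrow> nat list \<Rightarrow> bool" where
  "is_SHP n p \<longleftrightarrow> distinct p \<and> set p = {0..<n} \<and>
     (\<forall>i j. Suc i < length p \<longrightarrow> Suc j < length p \<longrightarrow>
        \<not> seg_cross (p ! i) (p ! Suc i) (p ! j) (p ! Suc j))"

definition meets_all_SHP :: "nat \<Rightarrow> nat set set \<Rightarrow> bool" where
  "meets_all_SHP n B \<longleftrightarrow> (\<forall>p. is_SHP n p \<longrightarrow> B \<inter> path_edges p \<noteq> {})"

definition is_SHP_blocker :: "nat \<Rightarrow> nat set set \<Rightarrow> bool" where
  "is_SHP_blocker n B \<longleftrightarrow> B \<subseteq> ck_edges n \<and> meets_all_SHP n B \<and>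
     (\<forall>B'. B' \<subseteq> ck_edges n \<longrightarrow> meets_all_SHP n B' \<longrightarrow> card B \<le> card B')"

definition edge_dir :: "nat \<Rightarrow> nat set \<Rightarrow> nat" where
  "edge_dir n e = (\<Sum>x\<in>e. x) mod n"

end

theory Submission
  imports Defs
begin


lemma seg_cross_sym: "seg_cross a b c d = seg_cross c d a b"
  unfolding seg_cross_def strictly_between_def by (auto simp: min_def max_def)

lemma sb_unit: "\<not> strictly_between x (Suc x) z" "\<not> strictly_between (Suc x) x z"
  unfolding strictly_between_def by auto

definition SS :: "nat \<Rightarrow> nat \<Rightarrow> nat set \<Rightarrow> bool" where
  "SS c v V \<longleftrightarrow> (\<forall>z1\<in>V-{c}. \<forall>z2\<in>V-{c}. strictly_between c v z1 = strictly_between c v z2)"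

lemma nocross_SS: "SS c v V \<Longrightarrow> x \<in> V \<Longrightarrow> y \<in> V \<Longrightarrow> \<not> seg_cross c v x y"
  unfolding SS_def seg_cross_def by auto

lemma nocross_SS2: "SS c v V \<Longrightarrow> x \<in> V \<Longrightarrow> y \<in> V \<Longrightarrow> \<not> seg_cross x y c v"
  using nocross_SS seg_cross_sym by metis

definition NC :: "nat list \<Rightarrow> bool" where
  "NC p \<longleftrightarrow> (\<forall>s t. Suc s < length p \<longrightarrow> Suc t < length p \<longrightarrow>
      \<not> seg_cross (p!s) (p!Suc s) (p!t) (p!Suc t))"

lemma path_edges_snoc: "p \<noteq> [] \<Longrightarrow> path_edges (p @ [v]) = insert {last p, v} (path_edges p)"
proof -
  assume p: "p \<noteq> []"
  have l: "last p = p ! (length p - 1)" using p by (simp add: last_conv_nth)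
  show ?thesis
  proof (rule set_eqI, rule iffI)
    fix e assume "e \<in> path_edges (p @ [v])"
    then obtain i where i: "e = {(p@[v])!i, (p@[v])!Suc i}" "Suc i < length p + 1"
      unfolding path_edges_def by auto
    show "e \<in> insert {last p, v} (path_edges p)"
    proof (cases "Suc i < length p")
      case True
      then have "e = {p!i, p!Suc i}" using i by (simp add: nth_append)
      then show ?thesis using True unfolding path_edges_def by auto
    next
      case False
      then have "i = length p - 1" using i by auto
      then have "e = {last p, v}" using i p l by (simp add: nth_append)
      then show ?thesis by auto
    qed
  next
    fix e assume "e \<in> insert {last p, v} (path_edges p)"
    then show "e \<in> path_edges (p @ [v])"
    proof
      assume e: "e = {last p, v}"
      have "(p@[v])!(length p - 1) = last p" using p l by (simp add: nth_append)
      moreover have "(p@[v])!Suc (length p - 1) = v" using p by (simp add: nth_append)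
      ultimately show ?thesis unfolding path_edges_def using e p
        by (auto intro!: exI[of _ "length p - 1"])
    next
      assume "e \<in> path_edges p"
      then obtain i where i: "e = {p!i, p!Suc i}" "Suc i < length p" unfolding path_edges_def by auto
      then have "e = {(p@[v])!i, (p@[v])!Suc i}" by (simp add: nth_append)
      then show ?thesis using i unfolding path_edges_def by auto
    qed
  qed
qed

lemma NC_snoc:
  assumes "NC p" "p \<noteq> []"
    and h: "\<And>x y. x \<in> set p \<Longrightarrow> y \<in> set p \<Longrightarrow> \<not> seg_cross (last p) v x y \<and> \<not> seg_cross x y (last p) v"
  shows "NC (p @ [v])"
  unfolding NC_def
proof (intro allI impI)
  fix s t assume st: "Suc s < length (p @ [v])" "Suc t < length (p @ [v])"
  have l: "last p = p ! (length p - 1)" using assms by (simp add: last_conv_nth)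
  have nth1: "\<And>x. x < length p \<Longrightarrow> (p@[v])!x = p!x" by (simp add: nth_append)
  have nth2: "(p@[v])!length p = v" by simp
  have nth3: "(p@[v])!(length p - 1) = last p" using l nth1 assms by (simp add: nth_append)
  have sameseg: "\<not> seg_cross a b a b" for a b unfolding seg_cross_def by auto
  show "\<not> seg_cross ((p@[v])!s) ((p@[v])!Suc s) ((p@[v])!t) ((p@[v])!Suc t)"
  proof (cases "Suc s < length p")
    case s: True
    show ?thesis
    proof (cases "Suc t < length p")
      case True
      then show ?thesis using s assms(1) nth1 unfolding NC_def by auto
    next
      case False
      then have t: "t = length p - 1" using st by auto
      have m: "p!s \<in> set p" "p!Suc s \<in> set p" using s by auto
      have e1: "(p@[v])!s = p!s" "(p@[v])!Suc s = p!Suc s" using s nth1 by auto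
      have e2: "(p@[v])!t = last p" using t nth3 by simp
      have e3: "(p@[v])!Suc t = v" using t assms(2) by (simp add: nth_append)
      show ?thesis unfolding e1 e2 e3 using h[OF m] by simp
    qed
  next
    case False
    then have s: "s = length p - 1" using st by auto
    show ?thesis
    proof (cases "Suc t < length p")
      case True
      have m: "p!t \<in> set p" "p!Suc t \<in> set p" using True by auto
      have e1: "(p@[v])!t = p!t" "(p@[v])!Suc t = p!Suc t" using True nth1 by auto
      have e2: "(p@[v])!s = last p" using s nth3 by simp
      have e3: "(p@[v])!Suc s = v" using s assms(2) by (simp add: nth_append)
      show ?thesis unfolding e1 e2 e3 using h[OF m] by simp
    next
      case False
      then have "t = length p - 1" using st by auto
      then show ?thesis using s sameseg by simp
    qed
  qed
qed




definition Dtype :: "int \<Rightarrow> bool" where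
  "Dtype x \<longleftrightarrow> (0 \<le> x \<and> (x = 0 \<or> odd x)) \<or> (x < 0 \<and> even x)"

lemma Dtype_pair: "Dtype x \<Longrightarrow> Dtype (x + 1) \<Longrightarrow> x = 0"
  unfolding Dtype_def by presburger


locale blk_setup =
  fixes m :: nat and B :: "nat set set" and al be j k :: nat
  assumes m2: "m \<ge> 2"
  and meets: "meets_all_SHP (2*m-1) B"
  and dirs_in: "\<forall>e\<in>B. \<exists>i<m. edge_dir (2*m - 1) e = edge_dir (2*m - 1) {i, i+1}"
  and one_per_dir: "\<forall>i<m. \<exists>!e. e \<in> B \<and> edge_dir (2*m - 1) e = edge_dir (2*m - 1) {i, i+1}"
  and aB: "{al, al+1} \<in> B" and afirst: "\<forall>i<al. {i, i+1} \<notin> B"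
  and bB: "{be, be+1} \<in> B" and blast: "\<forall>i. be < i \<and> i < m \<longrightarrow> {i, i+1} \<notin> B"
  and bem: "be < m"
  and aj: "al < j" and jk: "j < k" and kb: "k < be"
  and jfree: "{j, j+1} \<notin> B" and kfree: "{k, k+1} \<notin> B"
begin

definition n where "n = 2*m - 1"
definition L where "L = n - (be - al)"
definition P where "P i = (if i \<le> al then al - i else al + n - i)"

lemma m4: "m \<ge> 4" using aj jk kb bem by linarith
lemma n_eq: "n = 2*m - 1" by (simp add: n_def)
lemma L_eq: "L + be = n + al" using bem aj jk kb unfolding L_def n_def by linarith
lemma al_small: "al + 4 \<le> m" using aj jk kb bem by linarith
lemma ab3: "al + 3 \<le> be" using aj jk kb by linarith

lemma P_lt: "i < L \<Longrightarrow> P i < n"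
  unfolding P_def using L_eq n_eq m4 bem ab3 by auto

lemma P_cases: "i < L \<Longrightarrow> (i \<le> al \<and> P i = al - i) \<or> (al < i \<and> P i = al + n - i \<and> be < P i)"
  unfolding P_def using L_eq by auto

lemma P_inj: "i < L \<Longrightarrow> i' < L \<Longrightarrow> P i = P i' \<Longrightarrow> i = i'"
  using P_cases[of i] P_cases[of i'] L_eq bem n_eq ab3 by (cases "i \<le> al"; cases "i' \<le> al") auto

lemma P_notN: "i < L \<Longrightarrow> al < x \<Longrightarrow> x \<le> be \<Longrightarrow> P i \<noteq> x"
  using P_cases[of i] by auto

definition V where "V i b = P ` {..i} \<union> {al+1..b}"

lemma mem_V: "i < L \<Longrightarrow> z \<in> V i b \<longleftrightarrow>
   (al < z \<and> z \<le> b) \<or> (i \<le> al \<and> al - i \<le> z \<and> z \<le> al) \<or> (al < i \<and> (z \<le> al \<or> (al + n - i \<le> z \<and> z < n)))"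
proof -
  assume iL: "i < L"
  have "z \<in> P ` {..i} \<longleftrightarrow> (i \<le> al \<and> al - i \<le> z \<and> z \<le> al) \<or> (al < i \<and> (z \<le> al \<or> (al + n - i \<le> z \<and> z < n)))"
  proof
    assume "z \<in> P ` {..i}"
    then obtain i' where i': "i' \<le> i" "z = P i'" by auto
    then show "(i \<le> al \<and> al - i \<le> z \<and> z \<le> al) \<or> (al < i \<and> (z \<le> al \<or> (al + n - i \<le> z \<and> z < n)))"
      using iL L_eq n_eq unfolding P_def by (auto split: if_splits)
  next
    assume h: "(i \<le> al \<and> al - i \<le> z \<and> z \<le> al) \<or> (al < i \<and> (z \<le> al \<or> (al + n - i \<le> z \<and> z < n)))"
    show "z \<in> P ` {..i}"
    proof (cases "z \<le> al")
      case True
      then have "P (al - z) = z" unfolding P_def by auto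
      moreover have "al - z \<le> i" using h True by auto
      ultimately show ?thesis by (metis atMost_iff image_eqI)
    next
      case False
      then have z: "al < i" "al + n - i \<le> z" "z < n" using h by auto
      then have "P (al + n - z) = z" unfolding P_def by auto
      moreover have "al + n - z \<le> i" using z by auto
      ultimately show ?thesis by (metis atMost_iff image_eqI)
    qed
  qed
  then show ?thesis unfolding V_def by auto
qed

lemma V_lt: "i < L \<Longrightarrow> b \<le> be \<Longrightarrow> z \<in> V i b \<Longrightarrow> z < n"
  using mem_V[of i z b] n_eq bem ab3 by auto

lemma P_notin_V: "Suc i < L \<Longrightarrow> b \<le> be \<Longrightarrow> P (Suc i) \<notin> V i b"
proof
  assume h: "Suc i < L" "b \<le> be" "P (Suc i) \<in> V i b"
  then obtain i' where "i' \<le> i \<and> P (Suc i) = P i' \<or> (al < P (Suc i) \<and> P (Suc i) \<le> b)"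
    unfolding V_def by auto
  then show False
  proof
    assume "i' \<le> i \<and> P (Suc i) = P i'"
    then show False using P_inj[of "Suc i" i'] h by auto
  next
    assume "al < P (Suc i) \<and> P (Suc i) \<le> b"
    then show False using P_notN[of "Suc i" "P (Suc i)"] h by auto
  qed
qed

lemma Sb_notin_V: "i < L \<Longrightarrow> al \<le> b \<Longrightarrow> b < be \<Longrightarrow> Suc b \<notin> V i b"
proof
  assume h: "i < L" "al \<le> b" "b < be" "Suc b \<in> V i b"
  then obtain i' where "i' \<le> i \<and> Suc b = P i' \<or> (al < Suc b \<and> Suc b \<le> b)"
    unfolding V_def by auto
  then have "i' \<le> i \<and> Suc b = P i'" by auto
  moreover have "al \<le> b \<or> True" by simp
  ultimately show False using P_cases[of i'] h by auto
qed

lemma SS_unit1: "SS x (Suc x) W" unfolding SS_def using sb_unit by auto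
lemma SS_unit2: "SS (Suc x) x W" unfolding SS_def using sb_unit by auto

lemma SS_E_straight:
  assumes "Suc i < L" "b \<le> be"
  shows "SS (P i) (P (Suc i)) (V i b)"
proof (cases "Suc i \<le> al")
  case True
  then have "P i = Suc (P (Suc i))" unfolding P_def by auto
  then show ?thesis using SS_unit2 by metis
next
  case False
  show ?thesis
  proof (cases "i = al")
    case True
    then have e: "P i = 0" "P (Suc i) = n - 1" unfolding P_def using n_eq m4 by auto
    have "\<forall>z\<in>V i b - {P i}. strictly_between (P i) (P (Suc i)) z"
    proof
      fix z assume z: "z \<in> V i b - {P i}"
      then have "z < n" using V_lt[of i b z] assms by auto
      moreover have "z \<noteq> n - 1" using z P_notin_V[of i b] assms e by auto
      ultimately show "strictly_between (P i) (P (Suc i)) z"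
        using z e unfolding strictly_between_def by auto
    qed
    then show ?thesis unfolding SS_def by auto
  next
    case False
    then have "al < i" using \<open>\<not> Suc i \<le> al\<close> by auto
    then have "P i = Suc (P (Suc i))" unfolding P_def using assms L_eq by auto
    then show ?thesis using SS_unit2 by metis
  qed
qed

lemma SS_E_turn:
  assumes "Suc i < L" "al < b" "b \<le> be"
  shows "SS b (P (Suc i)) (V i b)"
proof (cases "Suc i \<le> al")
  case True
  have "\<forall>z\<in>V i b - {b}. strictly_between b (P (Suc i)) z"
  proof
    fix z assume z: "z \<in> V i b - {b}"
    then have "(al < z \<and> z \<le> b) \<or> (al - i \<le> z \<and> z \<le> al)"
      using mem_V[of i z b] assms True by auto
    then show "strictly_between b (P (Suc i)) z"
      using z True assms unfolding strictly_between_def P_def by auto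
  qed
  then show ?thesis unfolding SS_def by auto
next
  case False
  have pv: "P (Suc i) = al + n - Suc i" "b < P (Suc i)"
    using P_cases[of "Suc i"] False assms by auto
  have "\<forall>z\<in>V i b. \<not> strictly_between b (P (Suc i)) z"
  proof
    fix z assume z: "z \<in> V i b"
    then have "z \<le> b \<or> (al + n - i \<le> z)"
      using mem_V[of i z b] assms False by auto
    then show "\<not> strictly_between b (P (Suc i)) z"
      using pv False assms unfolding strictly_between_def by auto
  qed
  then show ?thesis unfolding SS_def by auto
qed

lemma SS_N_turn:
  assumes "i < L" "al \<le> b" "b < be"
  shows "SS (P i) (Suc b) (V i b)"
proof (cases "i \<le> al")
  case True
  have "\<forall>z\<in>V i b - {P i}. strictly_between (P i) (Suc b) z"
  proof
    fix z assume z: "z \<in> V i b - {P i}"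
    then have "(al < z \<and> z \<le> b) \<or> (al - i \<le> z \<and> z \<le> al)"
      using mem_V[of i z b] assms True by auto
    moreover have "z \<noteq> al - i" using z True unfolding P_def by auto
    ultimately show "strictly_between (P i) (Suc b) z"
      using z True assms unfolding strictly_between_def P_def by auto
  qed
  then show ?thesis unfolding SS_def by auto
next
  case False
  have pv: "P i = al + n - i" "be < P i"
    using P_cases[of i] False assms by auto
  have "\<forall>z\<in>V i b. \<not> strictly_between (P i) (Suc b) z"
  proof
    fix z assume z: "z \<in> V i b"
    then have "z \<le> b \<or> (al + n - i \<le> z)"
      using mem_V[of i z b] assms False by auto
    then show "\<not> strictly_between (P i) (Suc b) z"
      using pv False assms unfolding strictly_between_def by auto
  qed
  then show ?thesis unfolding SS_def by auto
qed

inductive reach :: "nat \<Rightarrow> nat \<Rightarrow> nat \<Rightarrow> nat list \<Rightarrow> bool" where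
  r0: "reach 0 al al [al]"
| rE: "reach i b c p \<Longrightarrow> Suc i < L \<Longrightarrow> {c, P (Suc i)} \<notin> B \<Longrightarrow> reach (Suc i) b (P (Suc i)) (p @ [P (Suc i)])"
| rN: "reach i b c p \<Longrightarrow> b < be \<Longrightarrow> {c, Suc b} \<notin> B \<Longrightarrow> reach i (Suc b) (Suc b) (p @ [Suc b])"

lemma P0: "P 0 = al" unfolding P_def by simp
lemma L_pos: "0 < L" using L_eq ab3 n_eq bem by linarith

lemma reach_inv:
  "reach i b c p \<Longrightarrow> i < L \<and> al \<le> b \<and> b \<le> be \<and> p \<noteq> [] \<and> set p = V i b \<and> distinct p \<and>
     last p = c \<and> (c = P i \<or> (c = b \<and> al < b)) \<and> path_edges p \<inter> B = {} \<and> NC p"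
proof (induction rule: reach.induct)
  case r0
  have "V 0 al = {al}" unfolding V_def using P0 by auto
  moreover have "path_edges [al] = {}" unfolding path_edges_def by auto
  moreover have "NC [al]" unfolding NC_def by auto
  ultimately show ?case using L_pos P0 ab3 by auto
next
  case (rE i b c p)
  have iL: "i < L" and bb: "al \<le> b" "b \<le> be" using rE by auto
  have Vs: "V (Suc i) b = insert (P (Suc i)) (V i b)" unfolding V_def by (auto simp: atMost_Suc)
  have nin: "P (Suc i) \<notin> set p" using rE P_notin_V by auto
  have SS: "SS c (P (Suc i)) (V i b)"
    using rE SS_E_straight SS_E_turn by auto
  have nc: "NC (p @ [P (Suc i)])"
    apply (rule NC_snoc) using rE nocross_SS[OF SS] nocross_SS2[OF SS] by auto
  have pe: "path_edges (p @ [P (Suc i)]) \<inter> B = {}"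
    using rE path_edges_snoc[of p "P (Suc i)"] by auto
  show ?case using rE Vs nin nc pe by auto
next
  case (rN i b c p)
  have iL: "i < L" and bb: "al \<le> b" "b < be" using rN by auto
  have Vs: "V i (Suc b) = insert (Suc b) (V i b)" unfolding V_def using bb by auto
  have nin: "Suc b \<notin> set p" using rN Sb_notin_V by auto
  have SS: "SS c (Suc b) (V i b)"
    using rN SS_N_turn SS_unit1 by auto
  have nc: "NC (p @ [Suc b])"
    apply (rule NC_snoc) using rN nocross_SS[OF SS] nocross_SS2[OF SS] by auto
  have pe: "path_edges (p @ [Suc b]) \<inter> B = {}"
    using rN path_edges_snoc[of p "Suc b"] by auto
  show ?case using rN Vs nin nc pe by auto
qed

lemma V_full: "V (L - 1) be = {0..<n}"
proof -
  have a: "al < L - 1" using L_eq n_eq bem ab3 by linarith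
  have b: "al + n - (L - 1) = Suc be" using L_eq a by linarith
  show ?thesis
  proof (rule set_eqI)
    fix z
    show "z \<in> V (L - 1) be \<longleftrightarrow> z \<in> {0..<n}"
      using mem_V[of "L - 1" z be] a b L_pos n_eq bem ab3 by auto
  qed
qed

lemma reach_final: "reach (L - 1) be c p \<Longrightarrow> False"
proof -
  assume r: "reach (L - 1) be c p"
  note inv = reach_inv[OF r]
  have shp: "is_SHP n p"
    unfolding is_SHP_def using inv V_full unfolding NC_def by auto
  then have "B \<inter> path_edges p \<noteq> {}" using meets unfolding meets_all_SHP_def n_def by auto
  then show False using inv by auto
qed

lemma edge_dir_pair: "x \<noteq> y \<Longrightarrow> edge_dir n {x, y} = (x + y) mod n"
  unfolding edge_dir_def by simp

lemma inB_dir: "e \<in> B \<Longrightarrow> \<exists>i<m. edge_dir n e = (2*i+1) mod n"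
proof -
  assume "e \<in> B"
  then obtain i where "i < m" "edge_dir n e = edge_dir n {i, i+1}" using dirs_in n_def by auto
  moreover have "edge_dir n {i, i+1} = (2*i+1) mod n" using edge_dir_pair[of i "i+1"] by (simp add: mult_2)
  ultimately show ?thesis by auto
qed

lemma Dres: "i < m \<Longrightarrow> (2*i+1) mod n = 0 \<or> odd ((2*i+1) mod n)"
proof -
  assume i: "i < m"
  show ?thesis
  proof (cases "Suc i = m")
    case True then have "2*i+1 = n" using n_eq by simp
    then show ?thesis by simp
  next
    case False then have "2*i+1 < n" using i n_eq by simp
    then show ?thesis by simp
  qed
qed

lemma inB_res: "e \<in> B \<Longrightarrow> edge_dir n e = 0 \<or> odd (edge_dir n e)"
  using inB_dir Dres by metis

lemma uniqB: "e1 \<in> B \<Longrightarrow> e2 \<in> B \<Longrightarrow> edge_dir n e1 = edge_dir n e2 \<Longrightarrow> e1 = e2"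
proof -
  assume h: "e1 \<in> B" "e2 \<in> B" "edge_dir n e1 = edge_dir n e2"
  obtain i where i: "i < m" "edge_dir n e1 = edge_dir n {i, i+1}" using dirs_in h n_def by auto
  then have "\<exists>!e. e \<in> B \<and> edge_dir n e = edge_dir n {i, i+1}" using one_per_dir n_def by auto
  then show ?thesis using h i by auto
qed

lemma Eedge_free: "x \<noteq> y \<Longrightarrow> even ((x + y) mod n) \<Longrightarrow> (x + y) mod n \<noteq> 0 \<Longrightarrow> {x, y} \<notin> B"
  using inB_res edge_dir_pair by metis

lemma Pfree: "Suc i < L \<Longrightarrow> {P i, P (Suc i)} \<notin> B"
proof -
  assume iL: "Suc i < L"
  show ?thesis
  proof (cases "Suc i \<le> al")
    case True
    then have "{P i, P (Suc i)} = {al - Suc i, Suc (al - Suc i)}" unfolding P_def by auto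
    moreover have "al - Suc i < al" using True by auto
    ultimately show ?thesis using afirst by (metis Suc_eq_plus1 insert_commute)
  next
    case False
    show ?thesis
    proof (cases "i = al")
      case True
      then have e: "{P i, P (Suc i)} = {0, n - 1}" unfolding P_def by auto
      have "(0 + (n - 1)) mod n = n - 1" using n_eq m4 by simp
      moreover have "even (n - 1)" using n_eq m4 by simp
      moreover have "n - 1 \<noteq> 0" using n_eq m4 by simp
      ultimately show ?thesis unfolding e using Eedge_free[of 0 "n - 1"] by auto
    next
      case False
      then have ai: "al < i" using \<open>\<not> Suc i \<le> al\<close> by auto
      define x where "x = al + n - Suc i"
      have e: "{P i, P (Suc i)} = {x, Suc x}" unfolding P_def x_def using ai iL L_eq by auto
      have xb: "be < x" "Suc x < n" using ai iL L_eq unfolding x_def by auto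
      show ?thesis
      proof (cases "x < m")
        case True
        then show ?thesis using blast xb e by (metis Suc_eq_plus1)
      next
        case False
        have s1: "x + Suc x = (2*(x - m) + 2) + n" using False xb n_eq by linarith
        have s2: "2*(x - m) + 2 < n" using False xb n_eq by linarith
        have "(x + Suc x) mod n = (2*(x - m) + 2) mod n" unfolding s1 by (simp only: mod_add_self2)
        also have "\<dots> = 2*(x - m) + 2" using s2 by simp
        finally have "(x + Suc x) mod n = 2*(x - m) + 2" .
        moreover have "x \<noteq> Suc x" by simp
        ultimately show ?thesis unfolding e using Eedge_free[of x "Suc x"] by auto
      qed
    qed
  qed
qed

lemma phase_run: "reach i b (P i) p \<Longrightarrow> i \<le> i' \<Longrightarrow> i' < L \<Longrightarrow> \<exists>p'. reach i' b (P i') p'"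
proof (induction i')
  case 0 then show ?case by auto
next
  case (Suc i')
  show ?case
  proof (cases "i = Suc i'")
    case True then show ?thesis using Suc by auto
  next
    case False
    then have "i \<le> i'" using Suc by auto
    then obtain p' where "reach i' b (P i') p'" using Suc by auto
    then have "reach (Suc i') b (P (Suc i')) (p' @ [P (Suc i')])"
      using rE Pfree Suc by auto
    then show ?thesis by auto
  qed
qed

lemma phase_zig:
  "reach i b (P i) p \<Longrightarrow> b + r \<le> be \<Longrightarrow> i + r < L \<Longrightarrow>
   (\<forall>s<r. {P (i+s), Suc (b+s)} \<notin> B \<and> {Suc (b+s), P (Suc (i+s))} \<notin> B) \<Longrightarrow>
   \<exists>p'. reach (i+r) (b+r) (P (i+r)) p'"
proof (induction r)
  case 0 then show ?case by auto
next
  case (Suc r)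
  then obtain p' where r1: "reach (i+r) (b+r) (P (i+r)) p'" by auto
  have e1: "{P (i+r), Suc (b+r)} \<notin> B" and e2: "{Suc (b+r), P (Suc (i+r))} \<notin> B" using Suc.prems by auto
  have "reach (i+r) (Suc (b+r)) (Suc (b+r)) (p' @ [Suc (b+r)])"
    using rN[OF r1] e1 Suc.prems by auto
  then have "reach (Suc (i+r)) (Suc (b+r)) (P (Suc (i+r))) ((p' @ [Suc (b+r)]) @ [P (Suc (i+r))])"
    by (rule rE) (use e2 Suc.prems in auto)
  then show ?case by auto
qed

lemma phase_hole:
  "reach i b (P i) p \<Longrightarrow> Suc (Suc b) \<le> be \<Longrightarrow> Suc i < L \<Longrightarrow>
   {P i, Suc b} \<notin> B \<Longrightarrow> {Suc b, Suc (Suc b)} \<notin> B \<Longrightarrow> {Suc (Suc b), P (Suc i)} \<notin> B \<Longrightarrow>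
   \<exists>p'. reach (Suc i) (Suc (Suc b)) (P (Suc i)) p'"
proof -
  assume h: "reach i b (P i) p" "Suc (Suc b) \<le> be" "Suc i < L"
    "{P i, Suc b} \<notin> B" "{Suc b, Suc (Suc b)} \<notin> B" "{Suc (Suc b), P (Suc i)} \<notin> B"
  have a: "reach i (Suc b) (Suc b) (p @ [Suc b])" using rN[OF h(1)] h by auto
  have b: "reach i (Suc (Suc b)) (Suc (Suc b)) ((p @ [Suc b]) @ [Suc (Suc b)])" using rN[OF a] h by auto
  have c: "reach (Suc i) (Suc (Suc b)) (P (Suc i)) (((p @ [Suc b]) @ [Suc (Suc b)]) @ [P (Suc i)])"
    using rE[OF b] h by auto
  then show ?thesis by auto
qed

lemma phase_hole2:
  "reach i b (P i) p \<Longrightarrow> Suc (Suc (Suc b)) \<le> be \<Longrightarrow> Suc i < L \<Longrightarrow>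
   {P i, Suc b} \<notin> B \<Longrightarrow> {Suc b, Suc (Suc b)} \<notin> B \<Longrightarrow> {Suc (Suc b), Suc (Suc (Suc b))} \<notin> B \<Longrightarrow>
   {Suc (Suc (Suc b)), P (Suc i)} \<notin> B \<Longrightarrow>
   \<exists>p'. reach (Suc i) (Suc (Suc (Suc b))) (P (Suc i)) p'"
proof -
  assume h: "reach i b (P i) p" "Suc (Suc (Suc b)) \<le> be" "Suc i < L"
    "{P i, Suc b} \<notin> B" "{Suc b, Suc (Suc b)} \<notin> B" "{Suc (Suc b), Suc (Suc (Suc b))} \<notin> B"
    "{Suc (Suc (Suc b)), P (Suc i)} \<notin> B"
  have a: "reach i (Suc b) (Suc b) (p @ [Suc b])" using rN[OF h(1)] h by auto
  have b: "reach i (Suc (Suc b)) (Suc (Suc b)) ((p @ [Suc b]) @ [Suc (Suc b)])" using rN[OF a] h by auto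
  have b2: "reach i (Suc (Suc (Suc b))) (Suc (Suc (Suc b))) (((p @ [Suc b]) @ [Suc (Suc b)]) @ [Suc (Suc (Suc b))])"
    using rN[OF b] h by auto
  have c: "reach (Suc i) (Suc (Suc (Suc b))) (P (Suc i)) ((((p @ [Suc b]) @ [Suc (Suc b)]) @ [Suc (Suc (Suc b))]) @ [P (Suc i)])"
    using rE[OF b2] h by auto
  then show ?thesis by auto
qed

lemma construct:
  assumes c0: "1 \<le> c0" "c0 + be \<le> L + al"
  and CA: "\<forall>b. al < b \<longrightarrow> b < j \<longrightarrow> {b, P (b + c0 - al)} \<notin> B"
  and CB: "\<forall>b. al < b \<longrightarrow> b < k \<longrightarrow> {P (b + c0 - al - 1), b} \<notin> B"
  and CC: "\<forall>b. j + 2 \<le> b \<longrightarrow> b \<le> be \<longrightarrow> {P (b + c0 - al - 2), b} \<notin> B"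
  and CD: "\<forall>b. k + 2 \<le> b \<longrightarrow> b \<le> be \<longrightarrow> {P (b + c0 - al - 3), b} \<notin> B"
  shows False
proof -
  have Lb: "c0 + be - 2 - al < L" "al < be" using c0 ab3 L_pos by auto
  have st0: "reach 0 al (P 0) [al]" using r0 P0 by simp
  obtain p0 where p0: "reach c0 al (P c0) p0"
    using phase_run[OF st0, of c0] c0 ab3 by auto
  define r1 where "r1 = j - 1 - al"
  have r1e: "al + r1 = j - 1" unfolding r1_def using aj by auto
  obtain p1 where p1: "reach (c0 + r1) (al + r1) (P (c0 + r1)) p1"
  proof -
    have "\<forall>s<r1. {P (c0+s), Suc (al+s)} \<notin> B \<and> {Suc (al+s), P (Suc (c0+s))} \<notin> B"
    proof (intro allI impI)
      fix s assume s: "s < r1"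
      have x1: "Suc (al+s) + c0 - al - 1 = c0 + s" by simp
      have x2: "Suc (al+s) + c0 - al = Suc (c0 + s)" by simp
      have sj: "Suc (al+s) < j" using s r1_def aj by auto
      have "{P (Suc (al+s) + c0 - al - 1), Suc (al+s)} \<notin> B"
        using CB[rule_format, of "Suc (al+s)"] sj jk by auto
      moreover have "{Suc (al+s), P (Suc (al+s) + c0 - al)} \<notin> B"
        using CA[rule_format, of "Suc (al+s)"] sj by auto
      ultimately show "{P (c0+s), Suc (al+s)} \<notin> B \<and> {Suc (al+s), P (Suc (c0+s))} \<notin> B"
        unfolding x1 x2 by auto
    qed
    moreover have "al + r1 \<le> be" "c0 + r1 < L" using r1e kb jk Lb by auto
    ultimately show ?thesis using phase_zig[OF p0] that by blast
  qed
  define i4 where "i4 = c0 + k - 1 - al"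
  have st4: "\<exists>p. reach i4 (Suc k) (P i4) p"
  proof (cases "k = Suc j")
    case True
    have jj: "al + r1 = j - 1" "Suc (al + r1) = j" using r1e aj by auto
    have ii: "Suc (c0 + r1) = i4" unfolding i4_def r1_def using True aj by auto
    have e1: "{P (c0 + r1), Suc (al + r1)} \<notin> B"
    proof -
      have "j + c0 - al - 1 = c0 + r1" unfolding r1_def using aj by auto
      then show ?thesis using CB aj True jj by (metis lessI)
    qed
    have e2: "{Suc (al + r1), Suc (Suc (al + r1))} \<notin> B" using jfree jj by simp
    have e3: "{Suc (Suc (al + r1)), Suc (Suc (Suc (al + r1)))} \<notin> B" using kfree jj True by simp
    have e4: "{Suc (Suc (Suc (al + r1))), P (Suc (c0 + r1))} \<notin> B"
    proof -
      have "Suc (Suc (Suc (al + r1))) = j + 2" using jj by simp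
      moreover have "j + 2 + c0 - al - 2 = Suc (c0 + r1)" unfolding r1_def using aj by auto
      moreover have "j + 2 \<le> be" using True kb by auto
      ultimately show ?thesis using CC by (metis insert_commute order_refl)
    qed
    have "Suc (Suc (Suc (al + r1))) \<le> be" "Suc (c0 + r1) < L" using jj True kb Lb ii unfolding i4_def by auto
    then obtain p' where "reach (Suc (c0 + r1)) (Suc (Suc (Suc (al + r1)))) (P (Suc (c0 + r1))) p'"
      using phase_hole2[OF p1 _ _ e1 e2 e3 e4] by blast
    moreover have "Suc (Suc (Suc (al + r1))) = Suc k" using jj True by simp
    ultimately show ?thesis using ii by auto
  next
    case False
    then have kj: "j + 2 \<le> k" using jk by auto
    have jj: "al + r1 = j - 1" "Suc (al + r1) = j" using r1e aj by auto
    have e1: "{P (c0 + r1), Suc (al + r1)} \<notin> B"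
    proof -
      have "j + c0 - al - 1 = c0 + r1" unfolding r1_def using aj by auto
      then show ?thesis using CB aj jk jj by metis
    qed
    have e2: "{Suc (al + r1), Suc (Suc (al + r1))} \<notin> B" using jfree jj by simp
    have e3: "{Suc (Suc (al + r1)), P (Suc (c0 + r1))} \<notin> B"
    proof -
      have "Suc (Suc (al + r1)) = j + 1" using jj by simp
      moreover have "j + 1 + c0 - al - 1 = Suc (c0 + r1)" unfolding r1_def using aj by auto
      moreover have "j + 1 < k" "al < j + 1" using kj aj by auto
      ultimately show ?thesis using CB by (metis insert_commute)
    qed
    have "Suc (Suc (al + r1)) \<le> be" "Suc (c0 + r1) < L" using jj kj kb Lb unfolding r1_def by auto
    then obtain p2 where p2: "reach (Suc (c0 + r1)) (Suc (Suc (al + r1))) (P (Suc (c0 + r1))) p2"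
      using phase_hole[OF p1 _ _ e1 e2 e3] by blast
    define i2 where "i2 = Suc (c0 + r1)"
    have i2e: "i2 = c0 + j - al" unfolding i2_def r1_def using aj by auto
    have b2e: "Suc (Suc (al + r1)) = j + 1" using jj by simp
    define r3 where "r3 = k - j - 2"
    obtain p3 where p3: "reach (i2 + r3) (j + 1 + r3) (P (i2 + r3)) p3"
    proof -
      have "\<forall>s<r3. {P (i2+s), Suc (j + 1 + s)} \<notin> B \<and> {Suc (j + 1 + s), P (Suc (i2+s))} \<notin> B"
      proof (intro allI impI)
        fix s assume s: "s < r3"
        have x1: "Suc (j+1+s) + c0 - al - 2 = i2 + s" using i2e aj by auto
        have x2: "Suc (j+1+s) + c0 - al - 1 = Suc (i2 + s)" using i2e aj by auto
        have bb: "j + 2 \<le> Suc (j+1+s)" "Suc (j+1+s) \<le> be" "al < Suc (j+1+s)" "Suc (j+1+s) < k"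
          using s r3_def kb aj by auto
        have "{P (Suc (j+1+s) + c0 - al - 2), Suc (j+1+s)} \<notin> B"
          using CC[rule_format, of "Suc (j+1+s)"] bb by blast
        moreover have "{P (Suc (j+1+s) + c0 - al - 1), Suc (j+1+s)} \<notin> B"
          using CB[rule_format, of "Suc (j+1+s)"] bb by blast
        ultimately show "{P (i2+s), Suc (j+1+s)} \<notin> B \<and> {Suc (j+1+s), P (Suc (i2+s))} \<notin> B"
          unfolding x1 x2 by (auto simp: insert_commute)
      qed
      moreover have "j + 1 + r3 \<le> be" "i2 + r3 < L" using kj kb Lb i2e c0 aj unfolding r3_def by auto
      ultimately show ?thesis using phase_zig[of i2 "j+1" p2 r3] p2 that unfolding i2_def b2e by blast
    qed
    have i3e: "i2 + r3 = c0 + k - 2 - al" "j + 1 + r3 = k - 1" using i2e kj aj unfolding r3_def by auto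
    have f1: "{P (i2 + r3), Suc (j + 1 + r3)} \<notin> B"
    proof -
      have q1: "Suc (j + 1 + r3) = k" using i3e kj by auto
      have q2: "k + c0 - al - 2 = i2 + r3" using i3e aj jk by auto
      have "{P (k + c0 - al - 2), k} \<notin> B" using CC[rule_format, of k] kj kb by auto
      then show ?thesis unfolding q1 q2 .
    qed
    have f2: "{Suc (j + 1 + r3), Suc (Suc (j + 1 + r3))} \<notin> B" using kfree i3e kj by auto
    have f3: "{Suc (Suc (j + 1 + r3)), P (Suc (i2 + r3))} \<notin> B"
    proof -
      have "Suc (Suc (j + 1 + r3)) = k + 1" using i3e kj by auto
      moreover have "k + 1 + c0 - al - 2 = Suc (i2 + r3)" using i3e aj jk by auto
      moreover have "j + 2 \<le> k + 1" "k + 1 \<le> be" using kj kb by auto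
      ultimately show ?thesis using CC by (metis insert_commute)
    qed
    have "Suc (Suc (j + 1 + r3)) \<le> be" "Suc (i2 + r3) < L" using i3e kb Lb c0 aj jk kj by auto
    then obtain p4 where "reach (Suc (i2 + r3)) (Suc (Suc (j + 1 + r3))) (P (Suc (i2 + r3))) p4"
      using phase_hole[OF p3 _ _ f1 f2 f3] by blast
    moreover have "Suc (i2 + r3) = i4" "Suc (Suc (j + 1 + r3)) = Suc k"
      using i3e kj aj unfolding i4_def by auto
    ultimately show ?thesis by auto
  qed
  then obtain p4 where p4: "reach i4 (Suc k) (P i4) p4" by auto
  define r5 where "r5 = be - k - 1"
  obtain p5 where p5: "reach (i4 + r5) (Suc k + r5) (P (i4 + r5)) p5"
  proof -
    have "\<forall>s<r5. {P (i4+s), Suc (Suc k + s)} \<notin> B \<and> {Suc (Suc k + s), P (Suc (i4+s))} \<notin> B"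
    proof (intro allI impI)
      fix s assume s: "s < r5"
      have x1: "Suc (Suc k+s) + c0 - al - 3 = i4 + s" unfolding i4_def using aj jk by auto
      have x2: "Suc (Suc k+s) + c0 - al - 2 = Suc (i4 + s)" unfolding i4_def using aj jk by auto
      have bb: "k + 2 \<le> Suc (Suc k+s)" "Suc (Suc k+s) \<le> be" "j + 2 \<le> Suc (Suc k+s)"
        using s r5_def kb jk by auto
      have "{P (Suc (Suc k+s) + c0 - al - 3), Suc (Suc k+s)} \<notin> B"
        using CD[rule_format, of "Suc (Suc k+s)"] bb by blast
      moreover have "{P (Suc (Suc k+s) + c0 - al - 2), Suc (Suc k+s)} \<notin> B"
        using CC[rule_format, of "Suc (Suc k+s)"] bb by blast
      ultimately show "{P (i4+s), Suc (Suc k+s)} \<notin> B \<and> {Suc (Suc k+s), P (Suc (i4+s))} \<notin> B"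
        unfolding x1 x2 by (auto simp: insert_commute)
    qed
    moreover have "Suc k + r5 \<le> be" "i4 + r5 < L" using kb Lb c0 aj jk unfolding r5_def i4_def by auto
    ultimately show ?thesis using phase_zig[OF p4] that by blast
  qed
  have e5: "Suc k + r5 = be" "i4 + r5 = c0 + be - 2 - al" using kb aj jk unfolding r5_def i4_def by auto
  have p5': "reach (c0 + be - 2 - al) be (P (c0 + be - 2 - al)) p5" using p5 unfolding e5 .
  have "\<exists>p'. reach (L - 1) be (P (L - 1)) p'"
    by (rule phase_run[OF p5']) (use Lb L_pos in auto)
  then show False using reach_final by blast
qed

definition bad :: "int \<Rightarrow> nat \<Rightarrow> bool" where
  "bad d b \<longleftrightarrow> al < b \<and> b \<le> be \<and> 0 \<le> int b - d \<and> int b - d < int L \<and> {P (nat (int b - d)), b} \<in> B"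

lemma intP: "c < L \<Longrightarrow> int (P c) = int al - int c + (if c \<le> al then 0 else int n)"
  unfolding P_def using L_eq by auto

lemma bad_dir: "bad d b \<Longrightarrow> int (edge_dir n {P (nat (int b - d)), b}) = (int al + d) mod int n"
proof -
  assume h: "bad d b"
  define c where "c = nat (int b - d)"
  have cL: "c < L" "int c = int b - d" using h unfolding bad_def c_def by auto
  have ne: "P c \<noteq> b" using P_notN[of c b] cL h unfolding bad_def by auto
  have "edge_dir n {P c, b} = (P c + b) mod n" using edge_dir_pair ne by auto
  then have "int (edge_dir n {P c, b}) = int (P c + b) mod int n" by (simp add: zmod_int)
  also have "int (P c + b) = int al + d + (if c \<le> al then 0 else int n)" using intP[OF cL(1)] cL by auto
  also have "(int al + d + (if c \<le> al then 0 else int n)) mod int n = (int al + d) mod int n" by auto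
  finally show ?thesis unfolding c_def .
qed

lemma bad_U: "bad d b1 \<Longrightarrow> bad d b2 \<Longrightarrow> b1 = b2"
proof -
  assume h1: "bad d b1" and h2: "bad d b2"
  define c1 where "c1 = nat (int b1 - d)"
  define c2 where "c2 = nat (int b2 - d)"
  have in1: "{P c1, b1} \<in> B" and in2: "{P c2, b2} \<in> B" using h1 h2 unfolding bad_def c1_def c2_def by auto
  have "int (edge_dir n {P c1, b1}) = int (edge_dir n {P c2, b2})"
    using bad_dir[OF h1] bad_dir[OF h2] unfolding c1_def c2_def by simp
  then have "{P c1, b1} = {P c2, b2}" using uniqB in1 in2 by auto
  moreover have "P c2 \<noteq> b1"
  proof -
    have c2L: "c2 < L" using h2 unfolding bad_def c2_def by auto
    have "al < b1" "b1 \<le> be" using h1 unfolding bad_def by auto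
    then show ?thesis using P_notN[OF c2L] by auto
  qed
  ultimately show ?thesis by (metis doubleton_eq_iff)
qed

lemma bad_T: "bad d b \<Longrightarrow> Dtype (int al + d)"
proof -
  assume h: "bad d b"
  define c where "c = nat (int b - d)"
  have cL: "c < L" "int c = int b - d" using h unfolding bad_def c_def by auto
  have inB: "{P c, b} \<in> B" using h unfolding bad_def c_def by auto
  have r: "edge_dir n {P c, b} = 0 \<or> odd (edge_dir n {P c, b})" using inB_res[OF inB] .
  have rr: "int (edge_dir n {P c, b}) = (int al + d) mod int n" using bad_dir[OF h] unfolding c_def .
  have bnd: "int al + d < int n" "- int n < int al + d"
    using h cL L_eq n_eq bem ab3 unfolding bad_def by auto
  show ?thesis
  proof (cases "0 \<le> int al + d")
    case True
    then have "(int al + d) mod int n = int al + d" using bnd by simp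
    then have e: "int (edge_dir n {P c, b}) = int al + d" using rr by simp
    have "int al + d = 0 \<or> odd (int al + d)"
    proof (cases "edge_dir n {P c, b} = 0")
      case True then show ?thesis using e by simp
    next
      case False
      then have "odd (edge_dir n {P c, b})" using r by simp
      then have "odd (int (edge_dir n {P c, b}))" by simp
      then show ?thesis using e by simp
    qed
    then show ?thesis using True unfolding Dtype_def by auto
  next
    case False
    have "(int al + d) mod int n = (int al + d + int n) mod int n" by simp
    also have "\<dots> = int al + d + int n" using bnd False by (intro mod_pos_pos_trivial) auto
    finally have "(int al + d) mod int n = int al + d + int n" .
    then have e: "int (edge_dir n {P c, b}) = int al + d + int n" using rr by simp
    have "odd (int n)" using n_eq m4 by simp
    moreover have "edge_dir n {P c, b} \<noteq> 0" using e bnd by auto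
    ultimately have "odd (edge_dir n {P c, b})" using r by simp
    then have "odd (int (edge_dir n {P c, b}))" by simp
    then have "odd (int al + d + int n)" using e by simp
    then have "even (int al + d)" using \<open>odd (int n)\<close> by simp
    then show ?thesis using False unfolding Dtype_def by auto
  qed
qed

lemma L_int: "int L = int n + int al - int be" using L_eq by linarith
lemma n_odd: "odd n" using n_eq m4 by simp

lemma corner1: "bad (int al + 1) (Suc al)"
proof -
  have "nat (int (Suc al) - (int al + 1)) = 0" by simp
  then show ?thesis unfolding bad_def using aB P0 L_pos ab3 by auto
qed

lemma corner2: "bad (int be - int L + 1) be"
proof -
  have a: "al < L - 1" using L_eq n_eq bem ab3 by linarith
  have c: "nat (int be - (int be - int L + 1)) = L - 1" using L_pos by simp
  have "P (L - 1) = Suc be" unfolding P_def using a L_eq by auto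
  then have "{P (nat (int be - (int be - int L + 1))), be} = {be, be + 1}" using c by auto
  then show ?thesis unfolding bad_def using bB L_pos ab3 by auto
qed

lemma exists_D:
  "\<exists>D. int be - int L + 1 \<le> D \<and> D \<le> int al \<and>
     (\<forall>b. al < b \<longrightarrow> b < j \<longrightarrow> \<not> bad (D - 1) b) \<and>
     (\<forall>b. al < b \<longrightarrow> b < k \<longrightarrow> \<not> bad D b) \<and>
     (\<forall>b. j + 2 \<le> b \<longrightarrow> b \<le> be \<longrightarrow> \<not> bad (D + 1) b) \<and>
     (\<forall>b. k + 2 \<le> b \<longrightarrow> b \<le> be \<longrightarrow> \<not> bad (D + 2) b)"
proof -
  define lo where "lo = int be - int L + 1"
  define pA where "pA d \<longleftrightarrow> (\<forall>b. al < b \<longrightarrow> b < j \<longrightarrow> \<not> bad d b)" for d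
  define qB where "qB d \<longleftrightarrow> (\<forall>b. al < b \<longrightarrow> b < k \<longrightarrow> \<not> bad d b)" for d
  define rC where "rC d \<longleftrightarrow> (\<forall>b. j + 2 \<le> b \<longrightarrow> b \<le> be \<longrightarrow> \<not> bad d b)" for d
  define sD where "sD d \<longleftrightarrow> (\<forall>b. k + 2 \<le> b \<longrightarrow> b \<le> be \<longrightarrow> \<not> bad d b)" for d
  have noE: "\<not> Dtype (int al + d) \<Longrightarrow> pA d \<and> qB d \<and> rC d \<and> sD d" for d
    using bad_T unfolding pA_def qB_def rC_def sD_def by blast
  have c1: "bad (int al + 1) b \<Longrightarrow> b = Suc al" for b using bad_U corner1 by blast
  have c1r: "rC (int al + 1)" "sD (int al + 1)" unfolding rC_def sD_def using c1 aj jk by fastforce+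
  have c2: "bad lo b \<Longrightarrow> b = be" for b using bad_U corner2 unfolding lo_def by blast
  have early: "bad d b0 \<Longrightarrow> b0 < j \<Longrightarrow> rC d \<and> sD d" for d b0
    unfolding rC_def sD_def using bad_U jk by fastforce
  have early2: "bad d b0 \<Longrightarrow> b0 < k \<Longrightarrow> sD d" for d b0
    unfolding sD_def using bad_U by fastforce
  have lo_sum: "int al + lo = 2 * int be + 1 - int n" unfolding lo_def using L_int by simp
  have lo_le: "int al + lo \<le> 0" using lo_sum n_eq bem by linarith
  have lo_D: "Dtype (int al + lo)" using lo_sum lo_le n_odd unfolding Dtype_def by auto
  have lo_al: "lo \<le> int al" using lo_le by linarith
  have pAlo: "pA lo" unfolding pA_def using c2 jk kb by fastforce
  have qBlo: "qB lo" unfolding qB_def using c2 kb by fastforce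
  define T1 where "T1 = {d \<in> {lo..int al}. Dtype (int al + d) \<and> pA d}"
  have T1f: "finite T1" unfolding T1_def by (rule finite_subset[of _ "{lo..int al}"]) auto
  have loT1: "lo \<in> T1" unfolding T1_def using lo_al lo_D pAlo by auto
  define d1 where "d1 = Max T1"
  have d1T: "d1 \<in> T1" unfolding d1_def using T1f loT1 Max_in by blast
  have d1max: "d \<in> T1 \<Longrightarrow> d \<le> d1" for d unfolding d1_def using T1f by auto
  have d1p: "lo \<le> d1" "d1 \<le> int al" "Dtype (int al + d1)" "pA d1" using d1T unfolding T1_def by auto
  have hmax1: "d1 < d \<Longrightarrow> d \<le> int al \<Longrightarrow> Dtype (int al + d) \<Longrightarrow> \<not> pA d" for d
    using d1max[of d] d1p unfolding T1_def by auto
  have fromL: "d1 < d \<Longrightarrow> d \<le> int al \<Longrightarrow> Dtype (int al + d) \<Longrightarrow> rC d \<and> sD d" for d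
  proof -
    assume a: "d1 < d" "d \<le> int al" "Dtype (int al + d)"
    then have "\<not> pA d" using hmax1 by auto
    then obtain b0 where "al < b0" "b0 < j" "bad d b0" unfolding pA_def by auto
    then show ?thesis using early by auto
  qed
  show ?thesis
  proof (cases "Dtype (int al + d1 + 1)")
    case False
    define D where "D = d1 + 1"
    have Dal: "D \<le> int al"
    proof (rule ccontr)
      assume "\<not> D \<le> int al"
      then have "d1 = int al" using d1p unfolding D_def by auto
      then have "Dtype (int al + d1 + 1)" unfolding Dtype_def by auto
      then show False using False by simp
    qed
    have a: "pA (D - 1)" using d1p unfolding D_def by simp
    have b: "qB D" using noE[of D] False unfolding D_def by (simp add: add.assoc)
    have c: "rC (D + 1)"
    proof (cases "D + 1 = int al + 1")
      case True then show ?thesis using c1r by simp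
    next
      case F2: False
      then have le: "D + 1 \<le> int al" using Dal by auto
      show ?thesis
      proof (cases "Dtype (int al + (D + 1))")
        case True then show ?thesis using fromL[of "D+1"] le unfolding D_def by auto
      next
        case False then show ?thesis using noE by blast
      qed
    qed
    have d: "sD (D + 2)"
    proof (cases "D + 2 = int al + 2")
      case True
      have "\<not> Dtype (int al + (D + 2))" using True unfolding Dtype_def by presburger
      then show ?thesis using noE by blast
    next
      case F2: False
      show ?thesis
      proof (cases "D + 2 = int al + 1")
        case True then show ?thesis unfolding True using c1r by simp
      next
        case F3: False
        then have le: "D + 2 \<le> int al" using Dal F2 by auto
        show ?thesis
        proof (cases "Dtype (int al + (D + 2))")
          case True then show ?thesis using fromL[of "D+2"] le unfolding D_def by auto
        next
          case False then show ?thesis using noE by blast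
        qed
      qed
    qed
    have "lo \<le> D" using d1p unfolding D_def by auto
    then show ?thesis using Dal a b c d unfolding pA_def qB_def rC_def sD_def lo_def by blast
  next
    case True
    have d10: "int al + d1 = 0" using Dtype_pair[of "int al + d1"] d1p True by (simp add: add.assoc)
    define T2 where "T2 = {d \<in> {lo..d1}. Dtype (int al + d) \<and> qB d}"
    have T2f: "finite T2" unfolding T2_def by (rule finite_subset[of _ "{lo..d1}"]) auto
    have loT2: "lo \<in> T2" unfolding T2_def using lo_le d10 lo_D qBlo by auto
    define d2 where "d2 = Max T2"
    have d2T: "d2 \<in> T2" unfolding d2_def using T2f loT2 Max_in by blast
    have d2max: "d \<in> T2 \<Longrightarrow> d \<le> d2" for d unfolding d2_def using T2f by auto
    have d2p: "lo \<le> d2" "d2 \<le> d1" "Dtype (int al + d2)" "qB d2" using d2T unfolding T2_def by auto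
    show ?thesis
    proof (cases "d2 = d1")
      case True
      have a: "pA (d1 - 1)"
      proof -
        have e: "int al + (d1 - 1) = -1" using d10 by simp
        have "\<not> Dtype (int al + (d1 - 1))" by (subst e) (simp add: Dtype_def)
        then show ?thesis using noE by blast
      qed
      have b: "qB d1" using d2p True by simp
      have c: "rC (d1 + 1)"
      proof (cases "d1 + 1 = int al + 1")
        case True then show ?thesis using c1r by simp
      next
        case False
        then have "d1 + 1 \<le> int al" using d10 by auto
        moreover have e: "int al + (d1 + 1) = 1" using d10 by simp
        have "Dtype (int al + (d1 + 1))" by (subst e) (simp add: Dtype_def)
        ultimately show ?thesis using fromL[of "d1+1"] by auto
      qed
      have d: "sD (d1 + 2)"
      proof -
        have e: "int al + (d1 + 2) = 2" using d10 by simp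
        have "\<not> Dtype (int al + (d1 + 2))" by (subst e) (simp add: Dtype_def)
        then show ?thesis using noE by blast
      qed
      have "d1 \<le> int al" using d10 by auto
      then show ?thesis using d1p a b c d unfolding pA_def qB_def rC_def sD_def lo_def by blast
    next
      case False
      then have lt: "d2 < d1" using d2p by auto
      have neg: "int al + d2 < 0" using lt d10 by auto
      then have ev: "even (int al + d2)" using d2p unfolding Dtype_def by auto
      then have le2: "int al + d2 \<le> -2" using neg by presburger
      have a: "pA (d2 - 1)"
      proof -
        have "\<not> Dtype (int al + (d2 - 1))" using neg ev unfolding Dtype_def by auto
        then show ?thesis using noE by blast
      qed
      have b: "qB d2" using d2p by simp
      have c: "rC (d2 + 1)"
      proof -
        have "\<not> Dtype (int al + (d2 + 1))" using le2 ev unfolding Dtype_def by auto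
        then show ?thesis using noE by blast
      qed
      have d: "sD (d2 + 2)"
      proof -
        have dt: "Dtype (int al + (d2 + 2))" using le2 ev unfolding Dtype_def by auto
        have le: "d2 + 2 \<le> d1" using le2 d10 by auto
        have "d2 + 2 \<notin> T2" using d2max[of "d2+2"] by auto
        then have "\<not> qB (d2 + 2)" using dt le d2p unfolding T2_def by auto
        then obtain b0 where "al < b0" "b0 < k" "bad (d2 + 2) b0" unfolding qB_def by auto
        then show ?thesis using early2 by auto
      qed
      have "d2 \<le> int al" using lt d10 by auto
      then show ?thesis using d2p a b c d unfolding pA_def qB_def rC_def sD_def lo_def by blast
    qed
  qed
qed

lemma contradiction: False
proof -
  obtain D where D: "int be - int L + 1 \<le> D" "D \<le> int al"
    "\<forall>b. al < b \<longrightarrow> b < j \<longrightarrow> \<not> bad (D - 1) b"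
    "\<forall>b. al < b \<longrightarrow> b < k \<longrightarrow> \<not> bad D b"
    "\<forall>b. j + 2 \<le> b \<longrightarrow> b \<le> be \<longrightarrow> \<not> bad (D + 1) b"
    "\<forall>b. k + 2 \<le> b \<longrightarrow> b \<le> be \<longrightarrow> \<not> bad (D + 2) b"
    using exists_D by blast
  define c0 where "c0 = nat (int al + 1 - D)"
  have c0i: "int c0 = int al + 1 - D" unfolding c0_def using D by auto
  have c0b: "1 \<le> c0" "c0 + be \<le> L + al" using c0i D by auto
  have key: "al < b \<Longrightarrow> b \<le> be \<Longrightarrow> 0 \<le> int b - d \<Longrightarrow> int b - d < int L \<Longrightarrow> \<not> bad d b \<Longrightarrow>
       x = nat (int b - d) \<Longrightarrow> {P x, b} \<notin> B" for b d x
    unfolding bad_def by auto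
  show False
  proof (rule construct[OF c0b])
    show "\<forall>b. al < b \<longrightarrow> b < j \<longrightarrow> {b, P (b + c0 - al)} \<notin> B"
    proof (intro allI impI)
      fix b assume b: "al < b" "b < j"
      have "{P (b + c0 - al), b} \<notin> B"
        by (rule key[of b "D - 1"]) (use b D c0i c0b jk kb in auto)
      then show "{b, P (b + c0 - al)} \<notin> B" by (simp add: insert_commute)
    qed
    show "\<forall>b. al < b \<longrightarrow> b < k \<longrightarrow> {P (b + c0 - al - 1), b} \<notin> B"
    proof (intro allI impI)
      fix b assume b: "al < b" "b < k"
      show "{P (b + c0 - al - 1), b} \<notin> B"
        by (rule key[of b D]) (use b D c0i c0b jk kb in auto)
    qed
    show "\<forall>b. j + 2 \<le> b \<longrightarrow> b \<le> be \<longrightarrow> {P (b + c0 - al - 2), b} \<notin> B"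
    proof (intro allI impI)
      fix b assume b: "j + 2 \<le> b" "b \<le> be"
      show "{P (b + c0 - al - 2), b} \<notin> B"
        by (rule key[of b "D + 1"]) (use b D c0i c0b aj jk kb in auto)
    qed
    show "\<forall>b. k + 2 \<le> b \<longrightarrow> b \<le> be \<longrightarrow> {P (b + c0 - al - 3), b} \<notin> B"
    proof (intro allI impI)
      fix b assume b: "k + 2 \<le> b" "b \<le> be"
      show "{P (b + c0 - al - 3), b} \<notin> B"
        by (rule key[of b "D + 2"]) (use b D c0i c0b aj jk kb in auto)
    qed
  qed
qed

end


theorem proposition3:
  fixes m :: nat and B :: "nat set set" and \<alpha> \<delta> :: nat
  assumes m2: "m \<ge> 2"
    and blk: "is_SHP_blocker (2*m - 1) B"
    and dirs_in: "\<forall>e\<in>B. \<exists>i<m. edge_dir (2*m - 1) e = edge_dir (2*m - 1) {i, i+1}"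
    and one_per_dir: "\<forall>i<m. \<exists>!e. e \<in> B \<and> edge_dir (2*m - 1) e = edge_dir (2*m - 1) {i, i+1}"
    and first: "\<alpha> < m" "{\<alpha>, \<alpha>+1} \<in> B" "\<forall>i<\<alpha>. {i, i+1} \<notin> B"
    and last: "\<delta> < m" "{m-\<delta>-1, m-\<delta>} \<in> B" "\<forall>i. m-\<delta>-1 < i \<and> i < m \<longrightarrow> {i, i+1} \<notin> B"
  shows "card {i. \<alpha> \<le> i \<and> i < m-\<delta> \<and> {i, i+1} \<notin> B} \<le> 1"
proof (rule ccontr)
  define S where "S = {i. \<alpha> \<le> i \<and> i < m-\<delta> \<and> {i, i+1} \<notin> B}"
  assume "\<not> card {i. \<alpha> \<le> i \<and> i < m-\<delta> \<and> {i, i+1} \<notin> B} \<le> 1"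
  then have c: "\<not> card S \<le> Suc 0" unfolding S_def by simp
  have fin: "finite S" unfolding S_def by (rule finite_subset[of _ "{..<m}"]) auto
  obtain x y where xy: "x \<in> S" "y \<in> S" "x \<noteq> y" using c card_le_Suc0_iff_eq[OF fin] by auto
  obtain j k where jk: "j \<in> S" "k \<in> S" "j < k"
  proof (cases "x < y")
    case True then show ?thesis using that xy by blast
  next
    case False then show ?thesis using that[of y x] xy by auto
  qed
  define be where "be = m - \<delta> - 1"
  have beS: "Suc be = m - \<delta>" unfolding be_def using last(1) by auto
  have j1: "\<alpha> \<le> j" "j < m - \<delta>" "{j, j+1} \<notin> B" using jk unfolding S_def by auto
  have k1: "\<alpha> \<le> k" "k < m - \<delta>" "{k, k+1} \<notin> B" using jk unfolding S_def by auto
  have aj: "\<alpha> < j" using j1 first(2) by (metis le_neq_implies_less)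
  have kb: "k < be"
  proof -
    have "k \<noteq> be" using k1 last(2) beS unfolding be_def by auto
    then show ?thesis using k1 beS by auto
  qed
  have bB: "{be, be+1} \<in> B" using last(2) beS unfolding be_def by simp
  have bl: "\<forall>i. be < i \<and> i < m \<longrightarrow> {i, i+1} \<notin> B" using last(3) unfolding be_def by simp
  have bem: "be < m" unfolding be_def using last(1) by auto
  have meets: "meets_all_SHP (2*m-1) B" using blk unfolding is_SHP_blocker_def by auto
  interpret blk_setup m B \<alpha> be j k
    using m2 meets dirs_in one_per_dir first(2) first(3) bB bl bem aj jk(3) kb j1(3) k1(3)
    by unfold_locales auto
  show False by (rule contradiction)
qed

end
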